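(* Let $f,g\in C^{2}[0,1]$ be real-valued. Then for all $x\in[0,1]$ and $n\in\mathbb{N}$, $$n\left|B_{n}(fg)(x)-B_{n}(f)(x)B_{n}(g)(x)-\frac{x(1-x)}{n}f'(x)g'(x)\right|$$ $$\le\frac{x(1-x)}{2}\left[\tilde{\omega}_{1}\Big((fg)'';\frac{1}{3\sqrt{n}}\Big)+\|g\|\,\tilde{\omega}_{1}\Big(f'';\frac{1}{3\sqrt{n}}\Big)+\|f\|\,\tilde{\omega}_{1}\Big(g'';\frac{1}{3\sqrt{n}}\Big)+\frac{1}{2n}\|f''\|\,\|g''\|\right].$$
   Context: For $f:[0,1]\to\mathbb{R}$ the Bernstein polynomials are $B_{n}(f)(x)=\sum_{k=0}^{n}\binom{n}{k}x^{k}(1-x)^{n-k}f(k/n)$. $\|\cdot\|$ denotes the uniform norm on $C[0,1]$. For $h\in C[0,1]$, $\omega_{1}(h;t)=\sup\{|h(x)-h(y)|: x,y\in[0,1],|x-y|\le t\}$ is the first-order modulus of continuity, and $\tilde{\omega}_{1}(h;\cdot)$ denotes its least concave majorant. *)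

theory Defs
  imports "HOL-Analysis.Analysis"
begin

definition bernstein :: "nat \<Rightarrow> (real \<Rightarrow> real) \<Rightarrow> real \<Rightarrow> real" where
  "bernstein n f x = (\<Sum>k=0..n. real (n choose k) * x ^ k * (1 - x) ^ (n - k) * f (real k / real n))"

definition d01 :: "(real \<Rightarrow> real) \<Rightarrow> real \<Rightarrow> real" where
  "d01 h x = vector_derivative h (at x within {0..1})"

definition C2_01 :: "(real \<Rightarrow> real) \<Rightarrow> bool" where
  "C2_01 h \<longleftrightarrow>
     (\<forall>x\<in>{0..1}. h differentiable (at x within {0..1})) \<and>
     (\<forall>x\<in>{0..1}. d01 h differentiable (at x within {0..1})) \<and>
     continuous_on {0..1} (d01 (d01 h))"

definition unorm :: "(real \<Rightarrow> real) \<Rightarrow> real" where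
  "unorm h = Sup {\<bar>h x\<bar> | x. x \<in> {0..1}}"

definition omega1 :: "(real \<Rightarrow> real) \<Rightarrow> real \<Rightarrow> real" where
  "omega1 h t = Sup {\<bar>h x - h y\<bar> | x y. x \<in> {0..1} \<and> y \<in> {0..1} \<and> \<bar>x - y\<bar> \<le> t}"

definition omega1_tilde :: "(real \<Rightarrow> real) \<Rightarrow> real \<Rightarrow> real" where
  "omega1_tilde h t = Inf {\<psi> t | \<psi>. concave_on {0..} \<psi> \<and> (\<forall>s\<ge>0. omega1 h s \<le> \<psi> s)}"

end

theory Submission
  imports Defs
begin


lemma bern_shift:
  "(\<Sum>k\<le>Suc m. g k * real k * Bernstein (Suc m) k x) = real (Suc m) * x * (\<Sum>k\<le>m. g (Suc k) * Bernstein m k x)"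
proof -
  have "(\<Sum>k\<le>Suc m. g k * real k * Bernstein (Suc m) k x) = (\<Sum>k\<le>m. g (Suc k) * real (Suc k) * Bernstein (Suc m) (Suc k) x)"
    by (subst sum.atMost_Suc_shift) simp
  also have "\<dots> = (\<Sum>k\<le>m. real (Suc m) * x * (g (Suc k) * Bernstein m k x))"
  proof (rule sum.cong[OF refl])
    fix k assume "k \<in> {..m}"
    have e: "real (Suc k) * real (Suc m choose Suc k) = real (Suc m) * real (m choose k)"
      using Suc_times_binomial[of k m] by (metis of_nat_mult)
    have "g (Suc k) * real (Suc k) * Bernstein (Suc m) (Suc k) x = g (Suc k) * (real (Suc k) * real (Suc m choose Suc k)) * x * (x^k * (1-x)^(m-k))"
      unfolding Bernstein_def by (simp add: mult_ac)
    also have "\<dots> = real (Suc m) * x * (g (Suc k) * Bernstein m k x)"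
      unfolding e Bernstein_def by (simp add: mult_ac)
    finally show "g (Suc k) * real (Suc k) * Bernstein (Suc m) (Suc k) x = real (Suc m) * x * (g (Suc k) * Bernstein m k x)" .
  qed
  finally show ?thesis by (simp add: sum_distrib_left)
qed

definition ff :: "nat \<Rightarrow> nat \<Rightarrow> real" where "ff k j = (\<Prod>i<j. real k - real i)"

lemma ff_Suc: "ff k (Suc j) = real k * ff (k - 1) j"
proof (cases k)
  case 0 then show ?thesis by (simp add: ff_def prod.lessThan_Suc_shift, arith)
next
  case (Suc k') then show ?thesis unfolding ff_def prod.lessThan_Suc_shift by simp
qed

lemma ff_moment: "(\<Sum>k\<le>n. ff k j * Bernstein n k x) = ff n j * x ^ j"
proof (induction j arbitrary: n)
  case 0 then show ?case by (simp add: ff_def)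
next
  case (Suc j)
  show ?case
  proof (cases n)
    case 0 then show ?thesis by (simp add: ff_def prod.lessThan_Suc_shift, arith)
  next
    case (Suc m)
    have "(\<Sum>k\<le>n. ff k (Suc j) * Bernstein n k x) = (\<Sum>k\<le>Suc m. ff (k - 1) j * real k * Bernstein (Suc m) k x)"
      by (simp add: Suc ff_Suc mult_ac)
    also have "\<dots> = real (Suc m) * x * (\<Sum>k\<le>m. ff k j * Bernstein m k x)"
      by (subst bern_shift) simp
    also have "\<dots> = ff n (Suc j) * x ^ Suc j"
      using Suc.IH[of m] by (simp add: Suc ff_Suc)
    finally show ?thesis .
  qed
qed

lemma ff_expl: "ff k 1 = real k" "ff k 2 = real k * (real k - 1)"
  "ff k 3 = real k * (real k - 1) * (real k - 2)"
  "ff k 4 = real k * (real k - 1) * (real k - 2) * (real k - 3)"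
  by (simp_all add: ff_def eval_nat_numeral)

lemma ff_Suc0: "ff k (Suc 0) = real k" by (simp add: ff_def)

lemma mom_sums:
  "(\<Sum>k\<le>n. real k * Bernstein n k x) = real n * x"
  "(\<Sum>k\<le>n. (real k)^2 * Bernstein n k x) = real n * (real n - 1) * x^2 + real n * x"
  "(\<Sum>k\<le>n. (real k)^3 * Bernstein n k x) = real n * (real n - 1) * (real n - 2) * x^3 + 3 * (real n * (real n - 1) * x^2) + real n * x"
  "(\<Sum>k\<le>n. (real k)^4 * Bernstein n k x) = real n * (real n - 1) * (real n - 2) * (real n - 3) * x^4
      + 6 * (real n * (real n - 1) * (real n - 2) * x^3) + 7 * (real n * (real n - 1) * x^2) + real n * x"
proof -
  have m: "\<And>j. (\<Sum>k\<le>n. ff k j * Bernstein n k x) = ff n j * x ^ j" by (rule ff_moment)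
  note m1 = m[of 1, unfolded ff_expl] and m2 = m[of 2, unfolded ff_expl]
   and m3 = m[of 3, unfolded ff_expl] and m4 = m[of 4, unfolded ff_expl]
  show "(\<Sum>k\<le>n. real k * Bernstein n k x) = real n * x" using m[of 1] by (simp add: ff_def)
  have "(\<Sum>k\<le>n. (real k)^2 * Bernstein n k x) = (\<Sum>k\<le>n. ff k 2 * Bernstein n k x + ff k 1 * Bernstein n k x)"
    by (rule sum.cong[OF refl], unfold ff_expl, algebra)
  also have "\<dots> = ff n 2 * x^2 + ff n 1 * x^1" by (simp only: sum.distrib m)
  finally show "(\<Sum>k\<le>n. (real k)^2 * Bernstein n k x) = real n * (real n - 1) * x^2 + real n * x"
    by (simp only: ff_expl power_one_right)
  have "(\<Sum>k\<le>n. (real k)^3 * Bernstein n k x) = (\<Sum>k\<le>n. ff k 3 * Bernstein n k x + 3 * (ff k 2 * Bernstein n k x) + ff k 1 * Bernstein n k x)"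
    by (rule sum.cong[OF refl], unfold ff_expl, algebra)
  also have "\<dots> = ff n 3 * x^3 + 3 * (ff n 2 * x^2) + ff n 1 * x^1" by (simp only: sum.distrib m flip: sum_distrib_left)
  finally show "(\<Sum>k\<le>n. (real k)^3 * Bernstein n k x) = real n * (real n - 1) * (real n - 2) * x^3 + 3 * (real n * (real n - 1) * x^2) + real n * x"
    by (simp only: ff_expl power_one_right)
  have "(\<Sum>k\<le>n. (real k)^4 * Bernstein n k x) = (\<Sum>k\<le>n. ff k 4 * Bernstein n k x + 6 * (ff k 3 * Bernstein n k x) + 7 * (ff k 2 * Bernstein n k x) + ff k 1 * Bernstein n k x)"
    by (rule sum.cong[OF refl], unfold ff_expl, algebra)
  also have "\<dots> = ff n 4 * x^4 + 6 * (ff n 3 * x^3) + 7 * (ff n 2 * x^2) + ff n 1 * x^1" by (simp only: sum.distrib m flip: sum_distrib_left)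
  finally show "(\<Sum>k\<le>n. (real k)^4 * Bernstein n k x) = real n * (real n - 1) * (real n - 2) * (real n - 3) * x^4
      + 6 * (real n * (real n - 1) * (real n - 2) * x^3) + 7 * (real n * (real n - 1) * x^2) + real n * x"
    by (simp only: ff_expl power_one_right)
qed




lemma cmom:
  "(\<Sum>k\<le>n. (real k - real n * x) * Bernstein n k x) = 0"
  "(\<Sum>k\<le>n. (real k - real n * x)^2 * Bernstein n k x) = real n * x * (1 - x)"
  "(\<Sum>k\<le>n. (real k - real n * x)^4 * Bernstein n k x) = real n * x * (1 - x) * (1 + 3 * (real n - 2) * x * (1 - x))"
proof -
  let ?B = "\<lambda>k. Bernstein n k x" and ?y = "real n * x"
  have "(\<Sum>k\<le>n. (real k - ?y) * ?B k) = (\<Sum>k\<le>n. real k * ?B k - ?y * ?B k)"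
    by (rule sum.cong[OF refl]) algebra
  also have "\<dots> = (\<Sum>k\<le>n. real k * ?B k) - ?y * (\<Sum>k\<le>n. ?B k)"
    by (simp only: sum_subtractf sum_distrib_left)
  also have "\<dots> = 0" by (simp add: mom_sums)
  finally show "(\<Sum>k\<le>n. (real k - real n * x) * Bernstein n k x) = 0" .
  have "(\<Sum>k\<le>n. (real k - ?y)^2 * ?B k) = (\<Sum>k\<le>n. (real k)^2 * ?B k - 2 * ?y * (real k * ?B k) + ?y^2 * ?B k)"
    by (rule sum.cong[OF refl]) algebra
  also have "\<dots> = (\<Sum>k\<le>n. (real k)^2 * ?B k) - 2 * ?y * (\<Sum>k\<le>n. real k * ?B k) + ?y^2 * (\<Sum>k\<le>n. ?B k)"
    by (simp only: sum_subtractf sum.distrib sum_distrib_left)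
  also have "\<dots> = real n * x * (1 - x)" by (simp only: mom_sums sum_Bernstein) algebra
  finally show "(\<Sum>k\<le>n. (real k - real n * x)^2 * Bernstein n k x) = real n * x * (1 - x)" .
  have "(\<Sum>k\<le>n. (real k - ?y)^4 * ?B k) = (\<Sum>k\<le>n. (real k)^4 * ?B k - 4 * ?y * ((real k)^3 * ?B k)
       + 6 * ?y^2 * ((real k)^2 * ?B k) - 4 * ?y^3 * (real k * ?B k) + ?y^4 * ?B k)"
    by (rule sum.cong[OF refl]) algebra
  also have "\<dots> = (\<Sum>k\<le>n. (real k)^4 * ?B k) - 4 * ?y * (\<Sum>k\<le>n. (real k)^3 * ?B k)
       + 6 * ?y^2 * (\<Sum>k\<le>n. (real k)^2 * ?B k) - 4 * ?y^3 * (\<Sum>k\<le>n. real k * ?B k) + ?y^4 * (\<Sum>k\<le>n. ?B k)"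
    by (simp only: sum_subtractf sum.distrib sum_distrib_left)
  also have "\<dots> = real n * x * (1 - x) * (1 + 3 * (real n - 2) * x * (1 - x))"
    by (simp only: mom_sums sum_Bernstein) algebra
  finally show "(\<Sum>k\<le>n. (real k - real n * x)^4 * Bernstein n k x) = real n * x * (1 - x) * (1 + 3 * (real n - 2) * x * (1 - x))" .
qed




lemma tmom:
  assumes n: "n \<ge> 1" and x: "0 \<le> x" "x \<le> 1"
  shows "(\<Sum>k\<le>n. (real k / real n - x) * Bernstein n k x) = 0"
    "(\<Sum>k\<le>n. (real k / real n - x)^2 * Bernstein n k x) = x * (1 - x) / real n"
    "(\<Sum>k\<le>n. \<bar>real k / real n - x\<bar>^3 * Bernstein n k x) \<le> x * (1 - x) / real n / sqrt (real n)"
proof -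
  have n0: "real n > 0" using n by simp
  have e: "\<And>k. real k / real n - x = (real k - real n * x) / real n" using n0 by (simp add: field_simps)
  have "(\<Sum>k\<le>n. (real k / real n - x) * Bernstein n k x) = (\<Sum>k\<le>n. (real k - real n * x) * Bernstein n k x) / real n"
    by (simp add: e sum_divide_distrib)
  then show "(\<Sum>k\<le>n. (real k / real n - x) * Bernstein n k x) = 0" by (simp add: cmom)
  have S2: "(\<Sum>k\<le>n. (real k / real n - x)^2 * Bernstein n k x) = (\<Sum>k\<le>n. (real k - real n * x)^2 * Bernstein n k x) / real n ^ 2"
    by (simp only: e power_divide sum_divide_distrib times_divide_eq_left)
  then show S2': "(\<Sum>k\<le>n. (real k / real n - x)^2 * Bernstein n k x) = x * (1 - x) / real n"
    unfolding S2 cmom using n0 by (simp add: power2_eq_square)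
  have S4: "(\<Sum>k\<le>n. (real k / real n - x)^4 * Bernstein n k x) = (\<Sum>k\<le>n. (real k - real n * x)^4 * Bernstein n k x) / real n ^ 4"
    by (simp only: e power_divide sum_divide_distrib times_divide_eq_left)
  define q where "q = x * (1 - x)"
  have q0: "0 \<le> q" using x unfolding q_def by simp
  have "0 \<le> (x - 1/2)^2" by simp
  then have q1: "q \<le> 1/4" unfolding q_def power2_eq_square by (simp add: algebra_simps)
  have "3 * (real n - 2) * q \<le> real n - 1"
  proof (cases "n \<ge> 2")
    case True
    then have "3 * (real n - 2) * q \<le> 3 * (real n - 2) * (1/4)" using q1 by (intro mult_left_mono) auto
    then show ?thesis by simp
  next
    case False then have "n = 1" using n by simp
    then show ?thesis using q0 by simp
  qed
  then have "q * (1 + 3 * (real n - 2) * q) \<le> q * real n" using q0 by (intro mult_left_mono) auto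
  then have S4le: "(\<Sum>k\<le>n. (real k / real n - x)^4 * Bernstein n k x) \<le> (x * (1 - x) / real n) / real n"
    unfolding S4 cmom using n0 by (simp add: q_def divide_simps power_eq_if mult_ac)
  define l where "l = 1 / sqrt (real n)"
  have l0: "l > 0" using n0 by (simp add: l_def)
  have pt: "\<bar>r\<bar>^3 \<le> (l * r^2 + r^4 / l) / 2" for r :: real
  proof -
    have "0 \<le> r^2 * (l - \<bar>r\<bar>)^2" by simp
    then have "2 * l * \<bar>r\<bar>^3 \<le> l^2 * r^2 + r^4"
      by (simp add: algebra_simps power2_eq_square power3_eq_cube power4_eq_xxxx abs_mult_self_eq)
    then show ?thesis using l0 by (simp add: field_simps power2_eq_square)
  qed
  have "(\<Sum>k\<le>n. \<bar>real k / real n - x\<bar>^3 * Bernstein n k x)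
      \<le> (\<Sum>k\<le>n. (l * (real k / real n - x)^2 + (real k / real n - x)^4 / l) / 2 * Bernstein n k x)"
    by (rule sum_mono, rule mult_right_mono[OF pt], simp add: Bernstein_nonneg x)
  also have "\<dots> = (\<Sum>k\<le>n. (l/2) * ((real k / real n - x)^2 * Bernstein n k x) + (1/(2*l)) * ((real k / real n - x)^4 * Bernstein n k x))"
    by (rule sum.cong[OF refl]) (simp add: field_simps)
  also have "\<dots> = (l/2) * (\<Sum>k\<le>n. (real k / real n - x)^2 * Bernstein n k x) + (1/(2*l)) * (\<Sum>k\<le>n. (real k / real n - x)^4 * Bernstein n k x)"
    by (simp only: sum.distrib sum_distrib_left)
  also have "\<dots> \<le> (l/2) * (x * (1 - x) / real n) + (1/(2*l)) * ((x * (1 - x) / real n) / real n)"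
    unfolding S2' using S4le l0 by (intro add_left_mono mult_left_mono) auto
  also have "\<dots> = x * (1 - x) / real n / sqrt (real n)"
  proof -
    define s where "s = sqrt (real n)"
    have s0: "s > 0" using n0 by (simp add: s_def)
    have ns: "real n = s * s" using n0 by (simp add: s_def)
    show ?thesis unfolding l_def s_def[symmetric] ns using s0 by (simp add: field_simps)
  qed
  finally show "(\<Sum>k\<le>n. \<bar>real k / real n - x\<bar>^3 * Bernstein n k x) \<le> x * (1 - x) / real n / sqrt (real n)" .
qed




lemma bernstein_alt: "bernstein n f x = (\<Sum>k\<le>n. f (real k / real n) * Bernstein n k x)"
  unfolding bernstein_def Bernstein_def atLeast0AtMost by (simp add: mult_ac)

lemma bern_taylor_sum:
  assumes n: "n \<ge> 1" and x: "0 \<le> x" "x \<le> 1" and b: "\<beta> \<ge> 0"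
    and H: "\<And>k. k \<le> n \<Longrightarrow> \<bar>h (real k / real n) - h x - a * (real k / real n - x) - c * (real k / real n - x)^2 / 2\<bar>
            \<le> \<alpha> * (real k / real n - x)^2 / 2 + \<beta> * \<bar>real k / real n - x\<bar>^3 / 6"
  shows "\<bar>bernstein n h x - h x - c * (x * (1 - x) / real n) / 2\<bar>
          \<le> \<alpha> * (x * (1 - x) / real n) / 2 + \<beta> * (x * (1 - x) / real n / sqrt (real n)) / 6"
proof -
  let ?t = "\<lambda>k. real k / real n" and ?B = "\<lambda>k. Bernstein n k x"
  let ?G = "\<lambda>k. h (?t k) - h x - a * (?t k - x) - c * (?t k - x)^2 / 2"
  have "(\<Sum>k\<le>n. ?G k * ?B k) = (\<Sum>k\<le>n. h (?t k) * ?B k) - h x * (\<Sum>k\<le>n. ?B k) - a * (\<Sum>k\<le>n. (?t k - x) * ?B k)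
        - (c / 2) * (\<Sum>k\<le>n. (?t k - x)^2 * ?B k)"
  proof -
    have "(\<Sum>k\<le>n. ?G k * ?B k) = (\<Sum>k\<le>n. h (?t k) * ?B k - h x * ?B k - a * ((?t k - x) * ?B k) - (c/2) * ((?t k - x)^2 * ?B k))"
      by (rule sum.cong[OF refl]) (simp add: algebra_simps)
    then show ?thesis by (simp only: sum_subtractf sum_distrib_left)
  qed
  also have "\<dots> = bernstein n h x - h x - c * (x * (1 - x) / real n) / 2"
    unfolding bernstein_alt tmom(1)[OF n x] tmom(2)[OF n x] sum_Bernstein by simp
  finally have eq: "bernstein n h x - h x - c * (x * (1 - x) / real n) / 2 = (\<Sum>k\<le>n. ?G k * ?B k)" by simp
  have "\<bar>\<Sum>k\<le>n. ?G k * ?B k\<bar> \<le> (\<Sum>k\<le>n. \<bar>?G k\<bar> * ?B k)"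
    by (rule order_trans[OF sum_abs]) (simp add: abs_mult Bernstein_nonneg x)
  also have "\<dots> \<le> (\<Sum>k\<le>n. (\<alpha> * (?t k - x)^2 / 2 + \<beta> * \<bar>?t k - x\<bar>^3 / 6) * ?B k)"
    by (rule sum_mono, rule mult_right_mono[OF H]) (simp_all add: Bernstein_nonneg x)
  also have "\<dots> = (\<alpha>/2) * (\<Sum>k\<le>n. (?t k - x)^2 * ?B k) + (\<beta>/6) * (\<Sum>k\<le>n. \<bar>?t k - x\<bar>^3 * ?B k)"
  proof -
    have "(\<Sum>k\<le>n. (\<alpha> * (?t k - x)^2 / 2 + \<beta> * \<bar>?t k - x\<bar>^3 / 6) * ?B k)
      = (\<Sum>k\<le>n. (\<alpha>/2) * ((?t k - x)^2 * ?B k) + (\<beta>/6) * (\<bar>?t k - x\<bar>^3 * ?B k))"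
      by (rule sum.cong[OF refl]) (simp add: algebra_simps)
    then show ?thesis by (simp only: sum.distrib sum_distrib_left)
  qed
  also have "\<dots> \<le> (\<alpha>/2) * (x * (1 - x) / real n) + (\<beta>/6) * (x * (1 - x) / real n / sqrt (real n))"
    unfolding tmom(2)[OF n x] using tmom(3)[OF n x] b by (intro add_left_mono mult_left_mono) auto
  finally show ?thesis unfolding eq by simp
qed




lemma cmp_right:
  fixes F FD FDD :: "real \<Rightarrow> real"
  assumes ab: "a \<le> b" and cF: "continuous_on {a..b} F" and cFD: "continuous_on {a..b} FD"
    and d1: "\<And>s. a < s \<Longrightarrow> s < b \<Longrightarrow> (F has_real_derivative FD s) (at s)"
    and d2: "\<And>s. a < s \<Longrightarrow> s < b \<Longrightarrow> (FD has_real_derivative FDD s) (at s)"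
    and p: "\<And>s. a < s \<Longrightarrow> s < b \<Longrightarrow> FDD s \<ge> 0"
    and z0: "F a = 0" and z1: "FD a = 0"
  shows "F b \<ge> 0"
proof -
  have FDp: "FD s \<ge> 0" if "a \<le> s" "s \<le> b" for s
  proof -
    have "FD a \<le> FD s"
      by (rule DERIV_nonneg_imp_increasing_open[OF \<open>a \<le> s\<close>])
        (use d2 p that in force, rule continuous_on_subset[OF cFD], use that in auto)
    then show ?thesis using z1 by simp
  qed
  have "F a \<le> F b"
    by (rule DERIV_nonneg_imp_increasing_open[OF ab])
      (use d1 FDp in force, rule cF)
  then show ?thesis using z0 by simp
qed

lemma cmp_left:
  fixes F FD FDD :: "real \<Rightarrow> real"
  assumes ab: "a \<le> b" and cF: "continuous_on {a..b} F" and cFD: "continuous_on {a..b} FD"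
    and d1: "\<And>s. a < s \<Longrightarrow> s < b \<Longrightarrow> (F has_real_derivative FD s) (at s)"
    and d2: "\<And>s. a < s \<Longrightarrow> s < b \<Longrightarrow> (FD has_real_derivative FDD s) (at s)"
    and p: "\<And>s. a < s \<Longrightarrow> s < b \<Longrightarrow> FDD s \<ge> 0"
    and z0: "F b = 0" and z1: "FD b = 0"
  shows "F a \<ge> 0"
proof -
  have FDp: "FD s \<le> 0" if "a \<le> s" "s \<le> b" for s
  proof -
    have "FD s \<le> FD b"
      by (rule DERIV_nonneg_imp_increasing_open[OF \<open>s \<le> b\<close>])
        (use d2 p that in force, rule continuous_on_subset[OF cFD], use that in auto)
    then show ?thesis using z1 by simp
  qed
  have "(\<lambda>s. - F s) a \<le> (\<lambda>s. - F s) b"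
    by (rule DERIV_nonneg_imp_increasing_open[OF ab])
      (use d1 FDp in \<open>force intro: DERIV_minus\<close>, intro continuous_intros cF)
  then show ?thesis using z0 by simp
qed




lemma taylor_cmp:
  fixes h h1 h2 :: "real \<Rightarrow> real"
  assumes D1: "\<And>y. y \<in> {0..1} \<Longrightarrow> (h has_real_derivative h1 y) (at y within {0..1})"
    and D2: "\<And>y. y \<in> {0..1} \<Longrightarrow> (h1 has_real_derivative h2 y) (at y within {0..1})"
    and x: "x \<in> {0..1}" and t: "t \<in> {0..1}"
    and B: "\<And>u. u \<in> {0..1} \<Longrightarrow> \<bar>h2 u - c\<bar> \<le> \<alpha> + \<beta> * \<bar>u - x\<bar>"
  shows "\<bar>h t - h x - h1 x * (t - x) - c * (t - x)^2 / 2\<bar> \<le> \<alpha> * (t - x)^2 / 2 + \<beta> * \<bar>t - x\<bar>^3 / 6"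
proof -
  have ch: "continuous_on {0..1} h" by (rule DERIV_continuous_on[OF D1])
  have ch1: "continuous_on {0..1} h1" by (rule DERIV_continuous_on[OF D2])
  have D1a: "(h has_real_derivative h1 s) (at s)" if "0 < s" "s < 1" for s
    using D1[of s] that by (simp add: at_within_Icc_at)
  have D2a: "(h1 has_real_derivative h2 s) (at s)" if "0 < s" "s < 1" for s
    using D2[of s] that by (simp add: at_within_Icc_at)
  let ?G = "\<lambda>s. h s - h x - h1 x * (s - x) - c * (s - x)^2 / 2"
  have main: "\<sigma> * ?G t \<le> \<alpha> * (t - x)^2 / 2 + \<beta> * \<bar>t - x\<bar>^3 / 6" if sg: "\<bar>\<sigma>\<bar> = 1" for \<sigma> :: real
  proof (cases "x \<le> t")
    case True
    let ?P = "\<lambda>s. \<alpha> * (s - x)^2 / 2 + \<beta> * (s - x)^3 / 6 - \<sigma> * ?G s"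
    let ?P1 = "\<lambda>s. \<alpha> * (s - x) + \<beta> * (s - x)^2 / 2 - \<sigma> * (h1 s - h1 x - c * (s - x))"
    let ?P2 = "\<lambda>s. \<alpha> + \<beta> * (s - x) - \<sigma> * (h2 s - c)"
    have sub: "{x..t} \<subseteq> {0..1}" using x t by auto
    have "?P t \<ge> 0"
    proof (rule cmp_right[where FD = "?P1" and FDD = "?P2", OF True])
      show "continuous_on {x..t} ?P"
        by (intro continuous_intros continuous_on_subset[OF ch sub]) auto
      show "continuous_on {x..t} ?P1"
        by (intro continuous_intros continuous_on_subset[OF ch1 sub]) auto
      fix s assume s: "x < s" "s < t"
      then have s01: "0 < s" "s < 1" using x t by auto
      show "(?P has_real_derivative ?P1 s) (at s)"
        using D1a[OF s01] by (auto intro!: derivative_eq_intros simp: power2_eq_square field_simps)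
      show "(?P1 has_real_derivative ?P2 s) (at s)"
        using D2a[OF s01] by (auto intro!: derivative_eq_intros simp: power2_eq_square field_simps)
      have "\<sigma> * (h2 s - c) \<le> \<bar>h2 s - c\<bar>" using sg abs_ge_self[of "\<sigma> * (h2 s - c)"] by (simp add: abs_mult)
      also have "\<dots> \<le> \<alpha> + \<beta> * (s - x)" using B[of s] s01 s by simp
      finally show "?P2 s \<ge> 0" by simp
    qed simp_all
    then show ?thesis using True by (simp add: abs_of_nonneg)
  next
    case False
    then have tx: "t \<le> x" by simp
    let ?P = "\<lambda>s. \<alpha> * (x - s)^2 / 2 + \<beta> * (x - s)^3 / 6 - \<sigma> * ?G s"
    let ?P1 = "\<lambda>s. - \<alpha> * (x - s) - \<beta> * (x - s)^2 / 2 - \<sigma> * (h1 s - h1 x - c * (s - x))"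
    let ?P2 = "\<lambda>s. \<alpha> + \<beta> * (x - s) - \<sigma> * (h2 s - c)"
    have sub: "{t..x} \<subseteq> {0..1}" using x t by auto
    have "?P t \<ge> 0"
    proof (rule cmp_left[where FD = "?P1" and FDD = "?P2", OF tx])
      show "continuous_on {t..x} ?P"
        by (intro continuous_intros continuous_on_subset[OF ch sub]) auto
      show "continuous_on {t..x} ?P1"
        by (intro continuous_intros continuous_on_subset[OF ch1 sub]) auto
      fix s assume s: "t < s" "s < x"
      then have s01: "0 < s" "s < 1" using x t by auto
      show "(?P has_real_derivative ?P1 s) (at s)"
        using D1a[OF s01] by (auto intro!: derivative_eq_intros simp: power2_eq_square field_simps)
      show "(?P1 has_real_derivative ?P2 s) (at s)"
        using D2a[OF s01] by (auto intro!: derivative_eq_intros simp: power2_eq_square field_simps)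
      have "\<sigma> * (h2 s - c) \<le> \<bar>h2 s - c\<bar>" using sg abs_ge_self[of "\<sigma> * (h2 s - c)"] by (simp add: abs_mult)
      also have "\<dots> \<le> \<alpha> + \<beta> * (x - s)" using B[of s] s01 s by simp
      finally show "?P2 s \<ge> 0" by simp
    qed simp_all
    moreover have "\<bar>t - x\<bar>^3 = (x - t)^3" "(t - x)^2 = (x - t)^2" using tx by (simp_all add: abs_of_nonpos power2_commute)
    ultimately show ?thesis by simp
  qed
  show ?thesis using main[of 1] main[of "-1"] by (simp add: abs_le_iff)
qed




lemma cont_bounded01:
  fixes h :: "real \<Rightarrow> real"
  assumes "continuous_on {0..1} h"
  obtains M where "\<And>y. y \<in> {0..1} \<Longrightarrow> \<bar>h y\<bar> \<le> M"
proof -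
  have "bounded (h ` {0..1})"
    using compact_continuous_image compact_imp_bounded assms by blast
  then show ?thesis using that by (force simp add: bounded_iff)
qed

lemma omega1_facts:
  fixes h :: "real \<Rightarrow> real"
  assumes c: "continuous_on {0..1} h"
  shows "\<And>u y. u \<in> {0..1} \<Longrightarrow> y \<in> {0..1} \<Longrightarrow> \<bar>h u - h y\<bar> \<le> omega1 h \<bar>u - y\<bar>"
    and "\<And>s. s \<ge> 0 \<Longrightarrow> omega1 h s \<ge> 0"
    and "\<exists>C. \<forall>s\<ge>0. omega1 h s \<le> C"
proof -
  obtain M where M: "\<And>y. y \<in> {0..1} \<Longrightarrow> \<bar>h y\<bar> \<le> M" using cont_bounded01[OF c] by blast
  have bdd: "bdd_above {\<bar>h x - h y\<bar> | x y. x \<in> {0..1} \<and> y \<in> {0..1} \<and> \<bar>x - y\<bar> \<le> s}" for s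
  proof (rule bdd_aboveI[where M = "2*M"])
    fix z assume "z \<in> {\<bar>h x - h y\<bar> | x y. x \<in> {0..1} \<and> y \<in> {0..1} \<and> \<bar>x - y\<bar> \<le> s}"
    then obtain a b where "a \<in> {0..1}" "b \<in> {0..1}" "z = \<bar>h a - h b\<bar>" by blast
    then show "z \<le> 2 * M" using M[of a] M[of b] by linarith
  qed
  show "\<bar>h u - h y\<bar> \<le> omega1 h \<bar>u - y\<bar>" if "u \<in> {0..1}" "y \<in> {0..1}" for u y
    unfolding omega1_def by (rule cSup_upper[OF _ bdd]) (use that in blast)
  show "omega1 h s \<ge> 0" if "s \<ge> 0" for s
  proof -
    have "\<bar>h 0 - h 0\<bar> \<le> omega1 h s"
      unfolding omega1_def by (rule cSup_upper[OF _ bdd]) (use that in force)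
    then show ?thesis by simp
  qed
  show "\<exists>C. \<forall>s\<ge>0. omega1 h s \<le> C"
  proof (intro exI allI impI)
    fix s :: real assume s: "s \<ge> 0"
    show "omega1 h s \<le> 2 * M"
      unfolding omega1_def
    proof (rule cSup_least)
      show "{\<bar>h x - h y\<bar> | x y. x \<in> {0..1} \<and> y \<in> {0..1} \<and> \<bar>x - y\<bar> \<le> s} \<noteq> {}" using s by force
      fix z assume "z \<in> {\<bar>h x - h y\<bar> | x y. x \<in> {0..1} \<and> y \<in> {0..1} \<and> \<bar>x - y\<bar> \<le> s}"
      then obtain a b where "a \<in> {0..1}" "b \<in> {0..1}" "z = \<bar>h a - h b\<bar>" by blast
      then show "z \<le> 2 * M" using M[of a] M[of b] by linarith
    qed
  qed
qed

lemma omega1_cong: "(\<And>y. y \<in> {0..1} \<Longrightarrow> h y = k y) \<Longrightarrow> omega1 h = omega1 k"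
  unfolding omega1_def by (intro ext arg_cong[where f = Sup]) (metis (no_types, lifting))

lemma unorm_facts:
  fixes h :: "real \<Rightarrow> real"
  assumes c: "continuous_on {0..1} h"
  shows "\<And>y. y \<in> {0..1} \<Longrightarrow> \<bar>h y\<bar> \<le> unorm h" and "unorm h \<ge> 0"
proof -
  obtain M where M: "\<And>y. y \<in> {0..1} \<Longrightarrow> \<bar>h y\<bar> \<le> M" using cont_bounded01[OF c] by blast
  have bdd: "bdd_above {\<bar>h x\<bar> | x. x \<in> {0..1}}"
    by (rule bdd_aboveI[where M = M]) (use M in blast)
  show *: "\<bar>h y\<bar> \<le> unorm h" if "y \<in> {0..1}" for y
    unfolding unorm_def by (rule cSup_upper[OF _ bdd]) (use that in blast)
  show "unorm h \<ge> 0" using *[of 0] by simp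
qed

lemma supergrad:
  fixes \<psi> :: "real \<Rightarrow> real"
  assumes cc: "concave_on {0..} \<psi>" and nn: "\<And>s. s \<ge> 0 \<Longrightarrow> \<psi> s \<ge> 0" and a: "a > 0"
  shows "\<exists>m\<ge>0. \<forall>r\<ge>0. \<psi> r \<le> \<psi> a + m * (r - a)"
proof -
  have cv: "convex_on {0..} (\<lambda>s. - \<psi> s)" using cc by (simp add: concave_on_def)
  have slope: "(\<psi> s - \<psi> a) / (s - a) \<le> (\<psi> a - \<psi> r) / (a - r)" if "0 \<le> r" "r < a" "a < s" for r s
  proof -
    have "((- \<psi> r) - (- \<psi> a)) / (r - a) \<le> ((- \<psi> a) - (- \<psi> s)) / (a - s)"
      using convex_on_slope_le[OF cv, of r s a] that by (auto intro: order_trans)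
    then show ?thesis using that by (simp add: field_simps)
  qed
  define L where "L = {(\<psi> a - \<psi> r) / (a - r) | r. 0 \<le> r \<and> r < a}"
  define m where "m = Inf L"
  have Lne: "L \<noteq> {}" using a unfolding L_def by force
  have Lbdd: "bdd_below L"
  proof (rule bdd_belowI[where m = "\<psi> (a+1) - \<psi> a"])
    fix z assume "z \<in> L"
    then obtain r where r: "0 \<le> r" "r < a" "z = (\<psi> a - \<psi> r) / (a - r)" unfolding L_def by blast
    show "\<psi> (a+1) - \<psi> a \<le> z" using slope[OF r(1,2), of "a+1"] r(3) by simp
  qed
  have left: "\<psi> r \<le> \<psi> a + m * (r - a)" if "0 \<le> r" "r < a" for r
  proof -
    have "m \<le> (\<psi> a - \<psi> r) / (a - r)" unfolding m_def
      by (rule cInf_lower[OF _ Lbdd]) (use that in \<open>auto simp: L_def\<close>)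
    then have "m * (a - r) \<le> \<psi> a - \<psi> r" using that by (simp add: le_divide_eq)
    then show ?thesis by (simp add: algebra_simps)
  qed
  have right: "\<psi> r \<le> \<psi> a + m * (r - a)" if "a < r" for r
  proof -
    have "(\<psi> r - \<psi> a) / (r - a) \<le> m" unfolding m_def
      by (rule cInf_greatest[OF Lne]) (use that in \<open>auto simp: L_def intro!: slope\<close>)
    then have "\<psi> r - \<psi> a \<le> m * (r - a)" using that by (simp add: divide_le_eq)
    then show ?thesis by simp
  qed
  have all: "\<forall>r\<ge>0. \<psi> r \<le> \<psi> a + m * (r - a)"
    using left right by (metis diff_self linorder_neqE_linordered_idom mult_zero_right add_0_right order_refl)
  have "m \<ge> 0"
  proof (rule ccontr)
    assume "\<not> m \<ge> 0"
    then have m0: "m < 0" by simp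
    define r where "r = a + (\<psi> a + 1) / (- m)"
    have "\<psi> a \<ge> 0" using nn a by simp
    then have "(\<psi> a + 1) / (- m) \<ge> 0" using m0 by (intro divide_nonneg_pos) auto
    then have r: "r \<ge> 0" "r - a = (\<psi> a + 1) / (- m)" using a unfolding r_def by linarith+
    have "\<psi> r \<le> \<psi> a + m * (r - a)" using all r by blast
    also have "\<dots> = -1" using m0 unfolding r(2) by (simp add: field_simps)
    finally show False using nn[OF r(1)] by simp
  qed
  then show ?thesis using all by blast
qed




lemma kn01: "k \<le> n \<Longrightarrow> n \<ge> 1 \<Longrightarrow> real k / real n \<in> {0..1}"
  by (auto simp: divide_le_eq_1)

lemma key:
  fixes h h1 h2 \<psi> :: "real \<Rightarrow> real"
  assumes D1: "\<And>y. y \<in> {0..1} \<Longrightarrow> (h has_real_derivative h1 y) (at y within {0..1})"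
    and D2: "\<And>y. y \<in> {0..1} \<Longrightarrow> (h1 has_real_derivative h2 y) (at y within {0..1})"
    and C: "continuous_on {0..1} h2"
    and cc: "concave_on {0..} \<psi>" and maj: "\<forall>s\<ge>0. omega1 h2 s \<le> \<psi> s"
    and x: "x \<in> {0..1}" and n: "n \<ge> 1"
  shows "real n * \<bar>bernstein n h x - h x - x * (1 - x) / (2 * real n) * h2 x\<bar> \<le> x * (1 - x) / 2 * \<psi> (1 / (3 * sqrt (real n)))"
proof -
  define \<delta> where "\<delta> = 1 / (3 * sqrt (real n))"
  have n0: "real n > 0" using n by simp
  have d0: "\<delta> > 0" using n0 by (simp add: \<delta>_def)
  have nn: "\<psi> s \<ge> 0" if "s \<ge> 0" for s using omega1_facts(2)[OF C that] maj that by force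
  obtain m where m0: "m \<ge> 0" and m: "\<And>r. r \<ge> 0 \<Longrightarrow> \<psi> r \<le> \<psi> \<delta> + m * (r - \<delta>)"
    using supergrad[OF cc nn d0] by blast
  have B: "\<bar>h2 u - h2 x\<bar> \<le> (\<psi> \<delta> - m * \<delta>) + m * \<bar>u - x\<bar>" if "u \<in> {0..1}" for u
  proof -
    have "\<bar>h2 u - h2 x\<bar> \<le> omega1 h2 \<bar>u - x\<bar>" by (rule omega1_facts(1)[OF C that x])
    also have "\<dots> \<le> \<psi> \<bar>u - x\<bar>" using maj by simp
    also have "\<dots> \<le> \<psi> \<delta> + m * (\<bar>u - x\<bar> - \<delta>)" by (rule m) simp
    finally show ?thesis by (simp add: algebra_simps)
  qed
  have x01: "0 \<le> x" "x \<le> 1" using x by auto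
  have "\<bar>bernstein n h x - h x - h2 x * (x * (1 - x) / real n) / 2\<bar>
      \<le> (\<psi> \<delta> - m * \<delta>) * (x * (1 - x) / real n) / 2 + m * (x * (1 - x) / real n / sqrt (real n)) / 6"
    by (rule bern_taylor_sum[OF n x01 m0], rule taylor_cmp[OF D1 D2 x kn01 B], use n in simp_all)
  also have "\<dots> = \<psi> \<delta> * (x * (1 - x) / real n) / 2"
    unfolding \<delta>_def using n0 by (simp add: field_simps)
  finally have "\<bar>bernstein n h x - h x - h2 x * (x * (1 - x) / real n) / 2\<bar> \<le> \<psi> \<delta> * (x * (1 - x) / real n) / 2" .
  then have "real n * \<bar>bernstein n h x - h x - h2 x * (x * (1 - x) / real n) / 2\<bar> \<le> real n * (\<psi> \<delta> * (x * (1 - x) / real n) / 2)"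
    using n0 by (intro mult_left_mono) auto
  moreover have "h2 x * (x * (1 - x) / real n) / 2 = x * (1 - x) / (2 * real n) * h2 x" by (simp add: field_simps)
  moreover have "real n * (\<psi> \<delta> * (x * (1 - x) / real n) / 2) = x * (1 - x) / 2 * \<psi> \<delta>" using n0 by simp
  ultimately show ?thesis unfolding \<delta>_def by simp
qed

lemma key2:
  fixes h h1 h2 :: "real \<Rightarrow> real"
  assumes D1: "\<And>y. y \<in> {0..1} \<Longrightarrow> (h has_real_derivative h1 y) (at y within {0..1})"
    and D2: "\<And>y. y \<in> {0..1} \<Longrightarrow> (h1 has_real_derivative h2 y) (at y within {0..1})"
    and C: "continuous_on {0..1} h2"
    and x: "x \<in> {0..1}" and n: "n \<ge> 1"
  shows "\<bar>bernstein n h x - h x\<bar> \<le> x * (1 - x) / (2 * real n) * unorm h2"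
proof -
  have x01: "0 \<le> x" "x \<le> 1" using x by auto
  have B: "\<bar>h2 u - 0\<bar> \<le> unorm h2 + 0 * \<bar>u - x\<bar>" if "u \<in> {0..1}" for u
    using unorm_facts(1)[OF C that] by simp
  have "\<bar>bernstein n h x - h x - 0 * (x * (1 - x) / real n) / 2\<bar>
      \<le> unorm h2 * (x * (1 - x) / real n) / 2 + 0 * (x * (1 - x) / real n / sqrt (real n)) / 6"
    by (rule bern_taylor_sum[OF n x01], simp, rule taylor_cmp[OF D1 D2 x kn01 B], use n in simp_all)
  then show ?thesis by (simp add: mult_ac)
qed




lemma d01_eq:
  assumes "y \<in> {0..1}" "(h has_real_derivative v) (at y within {0..1})"
  shows "d01 h y = v"
proof -
  have "(h has_vector_derivative v) (at y within cbox 0 1)"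
    using assms(2) by (simp add: cbox_interval has_real_derivative_iff_has_vector_derivative)
  from vector_derivative_within_cbox[OF _ _ this] assms(1) show ?thesis
    by (simp add: d01_def cbox_interval)
qed

lemma C2_facts:
  assumes "C2_01 h"
  shows "\<And>y. y \<in> {0..1} \<Longrightarrow> (h has_real_derivative d01 h y) (at y within {0..1})"
    and "\<And>y. y \<in> {0..1} \<Longrightarrow> (d01 h has_real_derivative d01 (d01 h) y) (at y within {0..1})"
    and "continuous_on {0..1} (d01 (d01 h))"
  using assms unfolding C2_01_def d01_def
  by (auto simp: has_real_derivative_iff_has_vector_derivative vector_derivative_works[symmetric])

lemma inf_lin:
  fixes S :: "real set"
  assumes "S \<noteq> {}" "G \<ge> 0" "\<And>s. s \<in> S \<Longrightarrow> A \<le> B + G * s"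
  shows "A \<le> B + G * Inf S"
proof (cases "G = 0")
  case True then show ?thesis using assms by auto
next
  case False
  then have G: "G > 0" using assms by simp
  have "(A - B) / G \<le> Inf S"
  proof (rule cInf_greatest[OF assms(1)])
    fix s assume "s \<in> S"
    then have "A - B \<le> G * s" using assms(3) by force
    then show "(A - B) / G \<le> s" using G by (simp add: divide_le_eq mult.commute)
  qed
  then show ?thesis using G by (simp add: divide_le_eq mult.commute)
qed

lemma tilde_set_ne:
  fixes k :: "real \<Rightarrow> real"
  assumes "continuous_on {0..1} k"
  shows "{\<psi> t | \<psi>. concave_on {0..} \<psi> \<and> (\<forall>s\<ge>0. omega1 k s \<le> \<psi> s)} \<noteq> {}"
proof -
  obtain C where C: "\<forall>s\<ge>0. omega1 k s \<le> C" using omega1_facts(3)[OF assms] by blast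
  have "concave_on {0..} (\<lambda>_::real. C)" by (simp add: concave_on_def convex_on_const convex_real_interval)
  then show ?thesis using C by blast
qed




theorem theorem2p1:
  fixes f g :: "real \<Rightarrow> real" and x :: real and n :: nat
  assumes "C2_01 f" and "C2_01 g" and "x \<in> {0..1}" and "n \<ge> 1"
  shows "real n * \<bar>bernstein n (\<lambda>t. f t * g t) x - bernstein n f x * bernstein n g x
            - x * (1 - x) / real n * d01 f x * d01 g x\<bar>
         \<le> x * (1 - x) / 2 *
           (omega1_tilde (d01 (d01 (\<lambda>t. f t * g t))) (1 / (3 * sqrt (real n)))
            + unorm g * omega1_tilde (d01 (d01 f)) (1 / (3 * sqrt (real n)))
            + unorm f * omega1_tilde (d01 (d01 g)) (1 / (3 * sqrt (real n)))
            + 1 / (2 * real n) * unorm (d01 (d01 f)) * unorm (d01 (d01 g)))"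
proof -
  note Cf = C2_facts[OF assms(1)] and Cg = C2_facts[OF assms(2)]
  note x = assms(3) and n = assms(4)
  have n0: "real n > 0" using n by simp
  define f1 where "f1 = d01 f"
  define f2 where "f2 = d01 (d01 f)"
  define g1 where "g1 = d01 g"
  define g2 where "g2 = d01 (d01 g)"
  define h1 where "h1 = (\<lambda>y. f1 y * g y + f y * g1 y)"
  define h2 where "h2 = (\<lambda>y. f2 y * g y + 2 * (f1 y * g1 y) + f y * g2 y)"
  have cf: "continuous_on {0..1} f" by (rule DERIV_continuous_on[OF Cf(1)])
  have cg: "continuous_on {0..1} g" by (rule DERIV_continuous_on[OF Cg(1)])
  have cf1: "continuous_on {0..1} f1" unfolding f1_def by (rule DERIV_continuous_on[OF Cf(2)])
  have cg1: "continuous_on {0..1} g1" unfolding g1_def by (rule DERIV_continuous_on[OF Cg(2)])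
  have cf2: "continuous_on {0..1} f2" unfolding f2_def by (rule Cf(3))
  have cg2: "continuous_on {0..1} g2" unfolding g2_def by (rule Cg(3))
  have Dh1: "((\<lambda>t. f t * g t) has_real_derivative h1 y) (at y within {0..1})" if "y \<in> {0..1}" for y
    using DERIV_mult[OF Cf(1)[OF that] Cg(1)[OF that]] by (simp add: h1_def f1_def g1_def mult_ac)
  have Dh2: "(h1 has_real_derivative h2 y) (at y within {0..1})" if "y \<in> {0..1}" for y
    using DERIV_add[OF DERIV_mult[OF Cf(2)[OF that] Cg(1)[OF that]] DERIV_mult[OF Cf(1)[OF that] Cg(2)[OF that]]]
    unfolding h1_def h2_def f1_def g1_def f2_def g2_def by (simp add: algebra_simps)
  have ch2: "continuous_on {0..1} h2" unfolding h2_def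
    by (intro continuous_intros cf cg cf1 cg1 cf2 cg2)
  have dh: "d01 (\<lambda>t. f t * g t) y = h1 y" if "y \<in> {0..1}" for y by (rule d01_eq[OF that Dh1[OF that]])
  have Dh1': "(d01 (\<lambda>t. f t * g t) has_real_derivative h2 y) (at y within {0..1})" if "y \<in> {0..1}" for y
    by (rule has_field_derivative_transform_within[OF Dh2[OF that] zero_less_one that]) (simp add: dh)
  have ddh: "d01 (d01 (\<lambda>t. f t * g t)) y = h2 y" if "y \<in> {0..1}" for y by (rule d01_eq[OF that Dh1'[OF that]])
  have om: "omega1 (d01 (d01 (\<lambda>t. f t * g t))) = omega1 h2" by (rule omega1_cong) (rule ddh)
  define \<delta> where "\<delta> = 1 / (3 * sqrt (real n))"
  define X where "X = x * (1 - x)"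
  have X0: "X \<ge> 0" and X1: "X \<le> 1" using x unfolding X_def by (auto intro: mult_le_one)
  define S1 where "S1 = {\<psi> \<delta> | \<psi>. concave_on {0..} \<psi> \<and> (\<forall>s\<ge>0. omega1 h2 s \<le> \<psi> s)}"
  define S2 where "S2 = {\<psi> \<delta> | \<psi>. concave_on {0..} \<psi> \<and> (\<forall>s\<ge>0. omega1 f2 s \<le> \<psi> s)}"
  define S3 where "S3 = {\<psi> \<delta> | \<psi>. concave_on {0..} \<psi> \<and> (\<forall>s\<ge>0. omega1 g2 s \<le> \<psi> s)}"
  have T1: "omega1_tilde (d01 (d01 (\<lambda>t. f t * g t))) \<delta> = Inf S1" unfolding omega1_tilde_def om S1_def ..
  have T2: "omega1_tilde (d01 (d01 f)) \<delta> = Inf S2" unfolding omega1_tilde_def S2_def f2_def ..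
  have T3: "omega1_tilde (d01 (d01 g)) \<delta> = Inf S3" unfolding omega1_tilde_def S3_def g2_def ..
  have ne1: "S1 \<noteq> {}" unfolding S1_def by (rule tilde_set_ne[OF ch2])
  have ne2: "S2 \<noteq> {}" unfolding S2_def by (rule tilde_set_ne[OF cf2])
  have ne3: "S3 \<noteq> {}" unfolding S3_def by (rule tilde_set_ne[OF cg2])
  define F where "F = unorm f"
  define G where "G = unorm g"
  define Uf where "Uf = unorm f2"
  define Ug where "Ug = unorm g2"
  have F: "\<bar>f x\<bar> \<le> F" "F \<ge> 0" using unorm_facts[OF cf] x unfolding F_def by auto
  have G: "\<bar>g x\<bar> \<le> G" "G \<ge> 0" using unorm_facts[OF cg] x unfolding G_def by auto
  have Uf0: "Uf \<ge> 0" using unorm_facts[OF cf2] unfolding Uf_def by auto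
  have Ug0: "Ug \<ge> 0" using unorm_facts[OF cg2] unfolding Ug_def by auto
  define e1 where "e1 = bernstein n (\<lambda>t. f t * g t) x - f x * g x - X / (2 * real n) * h2 x"
  define e2 where "e2 = bernstein n f x - f x - X / (2 * real n) * f2 x"
  define e3 where "e3 = bernstein n g x - g x - X / (2 * real n) * g2 x"
  define a where "a = bernstein n f x - f x"
  define b where "b = bernstein n g x - g x"
  have A: "\<bar>a\<bar> \<le> X / (2 * real n) * Uf"
    unfolding a_def X_def Uf_def f2_def by (rule key2[OF Cf(1) Cf(2) Cf(3) x n])
  have B: "\<bar>b\<bar> \<le> X / (2 * real n) * Ug"
    unfolding b_def X_def Ug_def g2_def by (rule key2[OF Cg(1) Cg(2) Cg(3) x n])
  have ident: "bernstein n (\<lambda>t. f t * g t) x - bernstein n f x * bernstein n g x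
            - x * (1 - x) / real n * d01 f x * d01 g x = e1 - f x * e3 - g x * e2 - a * b"
    unfolding e1_def e2_def e3_def a_def b_def h2_def X_def f1_def g1_def using n0
    by (simp add: field_simps)
  have ab: "real n * (\<bar>a\<bar> * \<bar>b\<bar>) \<le> X / 2 * (1 / (2 * real n) * Uf * Ug)"
  proof -
    have "\<bar>a\<bar> * \<bar>b\<bar> \<le> (X / (2 * real n) * Uf) * (X / (2 * real n) * Ug)"
      by (rule mult_mono[OF A B]) (use X0 Uf0 n0 in auto)
    then have "real n * (\<bar>a\<bar> * \<bar>b\<bar>) \<le> real n * ((X / (2 * real n) * Uf) * (X / (2 * real n) * Ug))"
      using n0 by (intro mult_left_mono) auto
    also have "\<dots> = (X * X) * (Uf * Ug) / (4 * real n)" using n0 by (simp add: field_simps)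
    also have "\<dots> \<le> X * (Uf * Ug) / (4 * real n)"
      using X0 X1 Uf0 Ug0 n0 by (intro divide_right_mono mult_right_mono) (auto intro: mult_le_one mult_left_le_one_le)
    also have "\<dots> = X / 2 * (1 / (2 * real n) * Uf * Ug)" by (simp add: field_simps)
    finally show ?thesis .
  qed
  let ?L = "real n * \<bar>bernstein n (\<lambda>t. f t * g t) x - bernstein n f x * bernstein n g x
            - x * (1 - x) / real n * d01 f x * d01 g x\<bar>"
  have all: "?L \<le> X / 2 * (1 / (2 * real n) * Uf * Ug) + (X/2) * s1 + (X/2 * G) * s2 + (X/2 * F) * s3"
    if s1: "s1 \<in> S1" and s2: "s2 \<in> S2" and s3: "s3 \<in> S3" for s1 s2 s3
  proof -
    obtain \<psi>1 where p1: "s1 = \<psi>1 \<delta>" "concave_on {0..} \<psi>1" "\<forall>s\<ge>0. omega1 h2 s \<le> \<psi>1 s" using s1 unfolding S1_def by blast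
    obtain \<psi>2 where p2: "s2 = \<psi>2 \<delta>" "concave_on {0..} \<psi>2" "\<forall>s\<ge>0. omega1 f2 s \<le> \<psi>2 s" using s2 unfolding S2_def by blast
    obtain \<psi>3 where p3: "s3 = \<psi>3 \<delta>" "concave_on {0..} \<psi>3" "\<forall>s\<ge>0. omega1 g2 s \<le> \<psi>3 s" using s3 unfolding S3_def by blast
    have E1: "real n * \<bar>e1\<bar> \<le> X / 2 * s1"
      using key[OF Dh1 Dh2 ch2 p1(2) p1(3) x n] unfolding e1_def X_def p1(1) \<delta>_def by simp
    have E2: "real n * \<bar>e2\<bar> \<le> X / 2 * s2"
      using key[OF Cf(1) Cf(2) Cf(3) p2(2)[unfolded f2_def] p2(3)[unfolded f2_def] x n]
      unfolding e2_def X_def p2(1) \<delta>_def f2_def by simp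
    have E3: "real n * \<bar>e3\<bar> \<le> X / 2 * s3"
      using key[OF Cg(1) Cg(2) Cg(3) p3(2)[unfolded g2_def] p3(3)[unfolded g2_def] x n]
      unfolding e3_def X_def p3(1) \<delta>_def g2_def by simp
    have "?L = real n * \<bar>e1 - f x * e3 - g x * e2 - a * b\<bar>" unfolding ident ..
    also have "\<dots> \<le> real n * \<bar>e1\<bar> + \<bar>f x\<bar> * (real n * \<bar>e3\<bar>) + \<bar>g x\<bar> * (real n * \<bar>e2\<bar>) + real n * (\<bar>a\<bar> * \<bar>b\<bar>)"
    proof -
      have "\<bar>e1 - f x * e3 - g x * e2 - a * b\<bar> \<le> \<bar>e1\<bar> + \<bar>f x\<bar> * \<bar>e3\<bar> + \<bar>g x\<bar> * \<bar>e2\<bar> + \<bar>a\<bar> * \<bar>b\<bar>"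
        by (simp add: abs_mult[symmetric])
      then have "real n * \<bar>e1 - f x * e3 - g x * e2 - a * b\<bar> \<le> real n * (\<bar>e1\<bar> + \<bar>f x\<bar> * \<bar>e3\<bar> + \<bar>g x\<bar> * \<bar>e2\<bar> + \<bar>a\<bar> * \<bar>b\<bar>)"
        using n0 by (intro mult_left_mono) auto
      then show ?thesis by (simp add: algebra_simps)
    qed
    also have "\<dots> \<le> X / 2 * s1 + F * (X / 2 * s3) + G * (X / 2 * s2) + X / 2 * (1 / (2 * real n) * Uf * Ug)"
      by (intro add_mono E1 ab mult_mono F G E2 E3) auto
    finally show ?thesis by (simp add: algebra_simps)
  qed
  have c1: "X/2 \<ge> 0" and c2: "X/2 * G \<ge> 0" and c3: "X/2 * F \<ge> 0" using X0 F G by auto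
  have st1: "?L \<le> (X / 2 * (1 / (2 * real n) * Uf * Ug) + (X/2 * G) * s2 + (X/2 * F) * s3) + (X/2) * Inf S1"
    if "s2 \<in> S2" "s3 \<in> S3" for s2 s3
    by (rule inf_lin[OF ne1 c1]) (use all[OF _ that] in \<open>simp add: algebra_simps\<close>)
  have st2: "?L \<le> (X / 2 * (1 / (2 * real n) * Uf * Ug) + (X/2) * Inf S1 + (X/2 * F) * s3) + (X/2 * G) * Inf S2"
    if "s3 \<in> S3" for s3
    by (rule inf_lin[OF ne2 c2]) (use st1[OF _ that] in \<open>simp add: algebra_simps\<close>)
  have st3: "?L \<le> (X / 2 * (1 / (2 * real n) * Uf * Ug) + (X/2) * Inf S1 + (X/2 * G) * Inf S2) + (X/2 * F) * Inf S3"
    by (rule inf_lin[OF ne3 c3]) (use st2 in \<open>simp add: algebra_simps\<close>)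
  show ?thesis
    using st3[unfolded T1[symmetric] T2[symmetric] T3[symmetric]]
    unfolding X_def F_def G_def Uf_def Ug_def \<delta>_def f2_def g2_def
    by (simp add: algebra_simps)
qed



end
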